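(* For every $a^*>0$ and every $\beta>0$, $\kappa_1(4\pi,\beta)<\beta$.
   Context: $\mathcal F_{4\pi}$ is the set of $f\in L^2(]0,a^*[)$ whose distributional derivative satisfies $\int_0^{a^*}a|f'(a)|^2da<\infty$, and $\kappa_1(4\pi,\beta):=\inf_{f\in\mathcal F_{4\pi}\setminus\{0\}}\frac{\int_0^{a^*}\left(4\pi a|f'|^2+\frac{\beta^2a}{4\pi}|f|^2\right)da}{\int_0^{a^*}|f|^2da}$. *)

theory Defs
  imports "HOL-Analysis.Analysis"
begin

definition test_fun :: "real \<Rightarrow> (real \<Rightarrow> real) \<Rightarrow> bool" where
  "test_fun A \<phi> \<longleftrightarrow>
     (\<forall>n x. ((deriv ^^ n) \<phi>) differentiable (at x)) \<and>
     (\<exists>K. compact K \<and> K \<subseteq> {0<..<A} \<and> (\<forall>x. x \<notin> K \<longrightarrow> \<phi> x = 0))"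

definition weak_deriv_on :: "real \<Rightarrow> (real \<Rightarrow> complex) \<Rightarrow> (real \<Rightarrow> complex) \<Rightarrow> bool" where
  "weak_deriv_on A f g \<longleftrightarrow>
     g \<in> borel_measurable lborel \<and>
     (\<forall>K. compact K \<and> K \<subseteq> {0<..<A} \<longrightarrow> set_integrable lborel K g) \<and>
     (\<forall>\<phi>. test_fun A \<phi> \<longrightarrow>
        (\<integral>x\<in>{0<..<A}. f x * of_real (deriv \<phi> x) \<partial>lborel)
          = - (\<integral>x\<in>{0<..<A}. g x * of_real (\<phi> x) \<partial>lborel))"

definition in_F :: "real \<Rightarrow> (real \<Rightarrow> complex) \<Rightarrow> (real \<Rightarrow> complex) \<Rightarrow> bool" where
  "in_F A f g \<longleftrightarrow>
     f \<in> borel_measurable lborel \<and>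
     set_integrable lborel {0<..<A} (\<lambda>x. (cmod (f x))\<^sup>2) \<and>
     weak_deriv_on A f g \<and>
     set_integrable lborel {0<..<A} (\<lambda>x. x * (cmod (g x))\<^sup>2)"

text \<open>kappa_1(4 pi, beta) for the interval ]0,A[ (A = a*). Nonzero f means nonzero in L^2.\<close>
definition kappa1 :: "real \<Rightarrow> real \<Rightarrow> real" where
  "kappa1 A \<beta> = Inf {(\<integral>x\<in>{0<..<A}. (4 * pi * x * (cmod (g x))\<^sup>2
                         + \<beta>\<^sup>2 * x / (4 * pi) * (cmod (f x))\<^sup>2) \<partial>lborel)
                     / (\<integral>x\<in>{0<..<A}. (cmod (f x))\<^sup>2 \<partial>lborel)
                   | f g. in_F A f g \<and> (\<integral>x\<in>{0<..<A}. (cmod (f x))\<^sup>2 \<partial>lborel) \<noteq> 0}"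

end

theory Submission
  imports Defs
begin
lemma ftc_Ioo:
  fixes f F :: "real \<Rightarrow> real"
  assumes "0 \<le> A" "continuous_on {0..A} f"
    "\<And>x. 0 \<le> x \<Longrightarrow> x \<le> A \<Longrightarrow> (F has_real_derivative f x) (at x)"
  shows "(LINT x:{0<..<A}|lborel. f x) = F A - F 0"
proof -
  have "(LBINT x=ereal 0..ereal A. f x) = F A - F 0"
    apply (rule interval_integral_FTC_finite)
    using assms by (auto simp: has_real_derivative_iff_has_vector_derivative[symmetric]
        intro: has_field_derivative_at_within)
  then show ?thesis using assms(1) by (simp add: interval_integral_Ioo)
qed

lemma cont_int:
  fixes f :: "real \<Rightarrow> 'a::{banach, second_countable_topology}"
  assumes "continuous_on UNIV f"
  shows "set_integrable lborel {0<..<A} f"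
proof -
  have "set_integrable lborel {0..A} f"
    unfolding set_integrable_def
    by (rule borel_integrable_compact) (auto intro: continuous_on_subset[OF assms])
  then show ?thesis by (rule set_integrable_subset) auto
qed

lemma weak_exp:
  fixes c A :: real
  assumes A: "A > 0"
  shows "weak_deriv_on A (\<lambda>x. complex_of_real (exp (-c*x))) (\<lambda>x. complex_of_real (-c * exp (-c*x)))"
  unfolding weak_deriv_on_def
proof (intro conjI allI impI)
  show "(\<lambda>x. complex_of_real (-c * exp (-c*x))) \<in> borel_measurable lborel"
    by measurable
next
  fix K :: "real set" assume "compact K \<and> K \<subseteq> {0<..<A}"
  then show "set_integrable lborel K (\<lambda>x. complex_of_real (-c * exp (-c*x)))"
    unfolding set_integrable_def
    by (intro borel_integrable_compact) (auto intro!: continuous_intros)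
next
  fix \<phi> assume tf: "test_fun A \<phi>"
  have d0: "\<And>x. \<phi> differentiable (at x)" using tf unfolding test_fun_def
    by (metis funpow_0)
  have d1: "\<And>x. deriv \<phi> differentiable (at x)" using tf unfolding test_fun_def
    by (metis funpow_0 funpow_Suc_right o_apply One_nat_def)
  have D: "\<And>x. (\<phi> has_real_derivative deriv \<phi> x) (at x)"
    using d0 DERIV_deriv_iff_real_differentiable by blast
  have cphi: "continuous_on UNIV \<phi>"
    using d0 by (simp add: differentiable_imp_continuous_on differentiable_on_def differentiable_at_withinI)
  have cdphi: "continuous_on UNIV (deriv \<phi>)"
    using d1 by (simp add: differentiable_imp_continuous_on differentiable_on_def differentiable_at_withinI)
  obtain K where K: "compact K" "K \<subseteq> {0<..<A}" "\<And>x. x \<notin> K \<Longrightarrow> \<phi> x = 0"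
    using tf unfolding test_fun_def by blast
  have "0 \<notin> K" "A \<notin> K" using K(2) by auto
  then have p0: "\<phi> 0 = 0" and pA: "\<phi> A = 0" using K(3) by auto
  define e where "e x = exp (-c*x)" for x
  have c1: "continuous_on UNIV (\<lambda>x. e x * deriv \<phi> x)"
    unfolding e_def by (intro continuous_intros cdphi)
  have c2: "continuous_on UNIV (\<lambda>x. (-c * e x) * \<phi> x)"
    unfolding e_def by (intro continuous_intros cphi)
  have "(LINT x:{0<..<A}|lborel. e x * deriv \<phi> x + (-c * e x) * \<phi> x)
        = e A * \<phi> A - e 0 * \<phi> 0"
    apply (rule ftc_Ioo)
    using A apply simp
     apply (rule continuous_on_subset[OF continuous_on_add[OF c1 c2]]) apply simp
    unfolding e_def
    apply (rule derivative_eq_intros D refl | simp)+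
    done
  also have "\<dots> = 0" using p0 pA by simp
  finally have "(LINT x:{0<..<A}|lborel. e x * deriv \<phi> x) + (LINT x:{0<..<A}|lborel. (-c * e x) * \<phi> x) = 0"
    using set_integral_add(2)[OF cont_int[OF c1] cont_int[OF c2]] by simp
  then have R: "(LINT x:{0<..<A}|lborel. e x * deriv \<phi> x) = - (LINT x:{0<..<A}|lborel. (-c * e x) * \<phi> x)"
    by linarith
  have E1: "(\<lambda>x. complex_of_real (exp (-c*x)) * complex_of_real (deriv \<phi> x)) = (\<lambda>x. complex_of_real (e x * deriv \<phi> x))"
    by (simp add: e_def fun_eq_iff)
  have E2: "(\<lambda>x. complex_of_real (-c * exp (-c*x)) * complex_of_real (\<phi> x)) = (\<lambda>x. complex_of_real ((-c * e x) * \<phi> x))"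
    by (simp add: e_def fun_eq_iff)
  show "(LINT x:{0<..<A}|lborel. complex_of_real (exp (-c*x)) * complex_of_real (deriv \<phi> x)) =
        - (LINT x:{0<..<A}|lborel. complex_of_real (-c * exp (-c*x)) * complex_of_real (\<phi> x))"
    unfolding E1 E2 set_integral_complex_of_real R by simp
qed

theorem mainTheorem8:
  fixes astar \<beta> :: real
  assumes "astar > 0" and "\<beta> > 0"
  shows "kappa1 astar \<beta> < \<beta>"
proof -
  define A where "A = astar"
  have A: "A > 0" using assms A_def by simp
  define c where "c = \<beta> / (4*pi)"
  have c: "c > 0" using assms(2) by (simp add: c_def)
  define k where "k = 2*c"
  have k: "k > 0" using c k_def by simp
  define f where "f x = complex_of_real (exp (-c*x))" for x
  define g where "g x = complex_of_real (-c * exp (-c*x))" for x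
  have nf: "(cmod (f x))\<^sup>2 = exp (-(k*x))" for x
    unfolding f_def k_def by (simp add: power2_eq_square exp_add[symmetric])
  have ng: "(cmod (g x))\<^sup>2 = c\<^sup>2 * exp (-(k*x))" for x
  proof -
    have "cmod (g x) = c * exp (-c*x)" unfolding g_def using c
      by (simp only: norm_of_real) (simp add: abs_mult)
    then show ?thesis unfolding k_def
      by (simp add: power2_eq_square exp_add[symmetric] algebra_simps)
  qed
  have inF: "in_F A f g"
    unfolding in_F_def
  proof (intro conjI)
    show "f \<in> borel_measurable lborel" unfolding f_def by measurable
    show "set_integrable lborel {0<..<A} (\<lambda>x. (cmod (f x))\<^sup>2)"
      unfolding nf by (intro cont_int continuous_intros)
    show "weak_deriv_on A f g" unfolding f_def[abs_def] g_def[abs_def] by (rule weak_exp[OF A])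
    show "set_integrable lborel {0<..<A} (\<lambda>x. x * (cmod (g x))\<^sup>2)"
      unfolding ng by (intro cont_int continuous_intros)
  qed
  define D where "D = (1 - exp (-(k*A))) / k"
  define J where "J = 1/k^2 - (A/k + 1/k^2) * exp (-(k*A))"
  have ID: "(\<integral>x\<in>{0<..<A}. (cmod (f x))\<^sup>2 \<partial>lborel) = D"
    unfolding nf D_def
    apply (subst ftc_Ioo[where F="\<lambda>x. - exp (-(k*x)) / k"])
    using A k apply simp
      apply (intro continuous_intros)
    using k apply (auto intro!: derivative_eq_intros simp: field_simps)
    done
  have eqN: "(\<lambda>x. 4 * pi * x * (cmod (g x))\<^sup>2 + \<beta>\<^sup>2 * x / (4 * pi) * (cmod (f x))\<^sup>2)
      = (\<lambda>x. (k*\<beta>) * (x * exp (-(k*x))))"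
    unfolding nf ng k_def c_def by (auto simp: fun_eq_iff field_simps power2_eq_square)
  have IN: "(\<integral>x\<in>{0<..<A}. (4 * pi * x * (cmod (g x))\<^sup>2 + \<beta>\<^sup>2 * x / (4 * pi) * (cmod (f x))\<^sup>2) \<partial>lborel) = k*\<beta>*J"
    unfolding eqN J_def
    apply (subst ftc_Ioo[where F="\<lambda>x. - (k*\<beta>) * ((x/k + 1/k^2) * exp (-(k*x)))"])
    using A k apply simp
      apply (intro continuous_intros)
    using k apply (auto intro!: derivative_eq_intros simp: field_simps power2_eq_square)
    done
  have Dpos: "D > 0" unfolding D_def using k A by (simp add: divide_pos_pos)
  have kJ: "k*J = D - A * exp (-(k*A))" unfolding J_def D_def using k
    by (simp add: field_simps power2_eq_square)
  have lt: "k*\<beta>*J / D < \<beta>"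
    using Dpos kJ A assms(2) by (simp add: divide_less_eq)
  let ?S = "{(\<integral>x\<in>{0<..<A}. (4 * pi * x * (cmod (g x))\<^sup>2
                         + \<beta>\<^sup>2 * x / (4 * pi) * (cmod (f x))\<^sup>2) \<partial>lborel)
                     / (\<integral>x\<in>{0<..<A}. (cmod (f x))\<^sup>2 \<partial>lborel)
                   | f g. in_F A f g \<and> (\<integral>x\<in>{0<..<A}. (cmod (f x))\<^sup>2 \<partial>lborel) \<noteq> 0}"
  have mem: "k*\<beta>*J / D \<in> ?S"
    using inF ID IN Dpos by force
  have bdd: "bdd_below ?S"
  proof (rule bdd_belowI[of _ 0])
    fix y assume "y \<in> ?S"
    then obtain f g where y: "y = (\<integral>x\<in>{0<..<A}. (4 * pi * x * (cmod (g x))\<^sup>2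
                         + \<beta>\<^sup>2 * x / (4 * pi) * (cmod (f x))\<^sup>2) \<partial>lborel)
                     / (\<integral>x\<in>{0<..<A}. (cmod (f x))\<^sup>2 \<partial>lborel)" by blast
    have "0 \<le> (\<integral>x\<in>{0<..<A}. (4 * pi * x * (cmod (g x))\<^sup>2
                         + \<beta>\<^sup>2 * x / (4 * pi) * (cmod (f x))\<^sup>2) \<partial>lborel)"
      unfolding set_lebesgue_integral_def
      using assms(2) by (intro Bochner_Integration.integral_nonneg) (auto simp: indicator_def)
    moreover have "0 \<le> (\<integral>x\<in>{0<..<A}. (cmod (f x))\<^sup>2 \<partial>lborel)"
      unfolding set_lebesgue_integral_def
      using assms(2) by (intro Bochner_Integration.integral_nonneg) (auto simp: indicator_def)
    ultimately show "0 \<le> y" unfolding y by simp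
  qed
  have "kappa1 A \<beta> \<le> k*\<beta>*J / D"
    unfolding kappa1_def by (rule cInf_lower[OF mem bdd])
  then show ?thesis using lt A_def by simp
qed

end
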